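(* Let $P \in \mathbb{C}[X]$ be a polynomial of degree $d$ with exactly $r \ge 2$ distinct complex roots, and let $V = \{v_1, \dots, v_r\} \subset \mathbb{C}$ be the set of its distinct roots. For a root $v$ of $P$, let $\mathrm{sep}(P, v) = \min\{|v - w| : w \in V,\ w \ne v\}$. Then for every subset $V' \subset V$, $$ \prod_{v \in V'}\mathrm{sep}(P, v) \ \ge\ |\mathrm{sDisc}_{d-r}(P)| \, \mathrm{M}(P)^{-2(r-1)} \Big(\frac{r}{\sqrt{3}}\Big)^{-\#V'} \,r^{-r} \, \Big(\frac13\Big)^{\min \{d,\, 2d-2r\}/3}. $$
   Context: Write $P = a_d \prod_{j=1}^r (X - v_j)^{m_j}$ with $a_d \ne 0$, $v_1,\dots,v_r$ pairwise distinct, $m_j \in \mathbb{N}$, $\sum_j m_j = d$; let $x_1,\dots,x_d$ be the roots of $P$ listed with multiplicity. The Mahler measure is $\mathrm{M}(P) = |a_d| \prod_{i=1}^d \max\{1,|x_i|\}$. For $0 \le k < d$, the $k$-th subdiscriminant is $\mathrm{sDisc}_k(P) = a_d^{2(d-k)-2} \sum_{I \subset \{1,\dots,d\},\ |I| = d-k} \ \prod_{i,j \in I,\ i<j} (x_i - x_j)^2$. In particular $|\mathrm{sDisc}_{d-r}(P)|^{1/2} = |a_d|^{r-1} \big(\prod_{j=1}^r m_j\big)^{1/2} \prod_{1\le i<j\le r}|v_i - v_j|$. *)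

theory Defs
  imports "HOL-Analysis.Analysis" "HOL-Computational_Algebra.Polynomial"
begin

text \<open>Roots of P listed with multiplicity, as a list x_0,...,x_{d-1} (any enumeration;
  the quantities below are symmetric in the roots, so the choice does not matter).\<close>
definition root_list :: "complex poly \<Rightarrow> complex list" where
  "root_list P = (SOME xs. mset xs = proots P)"

definition mahler_measure :: "complex poly \<Rightarrow> real" where
  "mahler_measure P = cmod (lead_coeff P) * prod_mset (image_mset (\<lambda>x. max 1 (cmod x)) (proots P))"

definition sDisc :: "nat \<Rightarrow> complex poly \<Rightarrow> complex" where
  "sDisc k P = (let d = degree P; xs = root_list P in
     lead_coeff P ^ (2 * (d - k) - 2) *
     (\<Sum>I \<in> {I. I \<subseteq> {0..<d} \<and> card I = d - k}.
        \<Prod>p \<in> {(i, j). i \<in> I \<and> j \<in> I \<and> i < j}. (xs ! fst p - xs ! snd p) ^ 2))"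

definition root_set :: "complex poly \<Rightarrow> complex set" where
  "root_set P = {x. poly P x = 0}"

definition sep :: "complex poly \<Rightarrow> complex \<Rightarrow> real" where
  "sep P v = Min {cmod (v - w) | w. w \<in> root_set P \<and> w \<noteq> v}"

end

theory Submission
  imports Defs "Jordan_Normal_Form.Determinant" "HOL-Computational_Algebra.Fundamental_Theorem_Algebra"
begin


definition cinner :: "nat \<Rightarrow> (nat \<Rightarrow> complex) \<Rightarrow> (nat \<Rightarrow> complex) \<Rightarrow> complex" where
  "cinner n x y = (\<Sum>k<n. x k * cnj (y k))"

definition nrm2 :: "nat \<Rightarrow> (nat \<Rightarrow> complex) \<Rightarrow> real" where
  "nrm2 n x = (\<Sum>k<n. (cmod (x k))^2)"

lemma cinner_self: "cinner n x x = complex_of_real (nrm2 n x)"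
  unfolding cinner_def nrm2_def of_real_sum
  by (rule sum.cong) (auto simp: complex_mult_cnj cmod_power2 simp del: of_real_power)

lemma nrm2_nonneg: "nrm2 n x \<ge> 0"
  unfolding nrm2_def by (simp add: sum_nonneg)

lemma nrm2_zero: "nrm2 n x = 0 \<Longrightarrow> k < n \<Longrightarrow> x k = 0"
  unfolding nrm2_def
  by (subst (asm) sum_nonneg_eq_0_iff) auto

lemma cinner_zero_right: "nrm2 n y = 0 \<Longrightarrow> cinner n x y = 0"
  unfolding cinner_def using nrm2_zero[of n y] by (auto intro!: sum.neutral)

lemma cinner_cnj: "cinner n y x = cnj (cinner n x y)"
  unfolding cinner_def by (simp add: mult.commute)

primrec GT :: "(nat \<Rightarrow> nat \<Rightarrow> complex) \<Rightarrow> nat \<Rightarrow> nat \<Rightarrow> nat \<Rightarrow> nat \<Rightarrow> complex" where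
  "GT a n 0 = (\<lambda>j k. 0)"
| "GT a n (Suc i) = (GT a n i)(i := (\<lambda>k. a i k - (\<Sum>j<i. (cinner n (a i) (GT a n i j) / cinner n (GT a n i j) (GT a n i j)) * GT a n i j k)))"

definition gs where "gs a n i = GT a n (Suc i) i"

lemma GT_stable: "j < i \<Longrightarrow> GT a n i j = gs a n j"
proof (induction i)
  case 0 then show ?case by simp
next
  case (Suc i)
  then show ?case unfolding gs_def by (cases "j = i") auto
qed

definition coef where "coef a n i j = cinner n (a i) (gs a n j) / cinner n (gs a n j) (gs a n j)"

lemma gs_eq: "gs a n i = (\<lambda>k. a i k - (\<Sum>j<i. coef a n i j * gs a n j k))"
proof -
  have "gs a n i = (\<lambda>k. a i k - (\<Sum>j<i. (cinner n (a i) (GT a n i j) / cinner n (GT a n i j) (GT a n i j)) * GT a n i j k))"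
    unfolding gs_def by simp
  also have "\<dots> = (\<lambda>k. a i k - (\<Sum>j<i. coef a n i j * gs a n j k))"
    by (intro ext arg_cong2[where f="(-)"] refl sum.cong) (auto simp: GT_stable coef_def)
  finally show ?thesis .
qed

lemma cinner_diff_sum: "cinner n (\<lambda>k. x k - (\<Sum>j\<in>J. c j * y j k)) z = cinner n x z - (\<Sum>j\<in>J. c j * cinner n (y j) z)"
  unfolding cinner_def
  by (simp add: left_diff_distrib sum_subtractf sum_distrib_left sum_distrib_right mult.assoc sum.swap[of _ J])

lemma gs_orth: "l < i \<Longrightarrow> cinner n (gs a n i) (gs a n l) = 0"
proof (induction i arbitrary: l rule: less_induct)
  case (less i)
  have orth: "cinner n (gs a n j) (gs a n l) = 0" if "j < i" "j \<noteq> l" for j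
  proof (cases "l < j")
    case True then show ?thesis using less.IH[of j l] that by auto
  next
    case False
    then have "j < l" using that by auto
    then have "cinner n (gs a n l) (gs a n j) = 0" using less.IH[of l j] less.prems by auto
    then show ?thesis by (subst cinner_cnj) simp
  qed
  have "cinner n (gs a n i) (gs a n l) = cinner n (a i) (gs a n l) - (\<Sum>j<i. coef a n i j * cinner n (gs a n j) (gs a n l))"
    by (subst gs_eq) (rule cinner_diff_sum)
  also have "(\<Sum>j<i. coef a n i j * cinner n (gs a n j) (gs a n l)) = coef a n i l * cinner n (gs a n l) (gs a n l)"
    using less.prems by (subst sum.remove[of _ l]) (auto simp: orth intro!: sum.neutral)
  also have "cinner n (a i) (gs a n l) - \<dots> = 0"
  proof (cases "cinner n (gs a n l) (gs a n l) = 0")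
    case True
    then have "nrm2 n (gs a n l) = 0" by (simp add: cinner_self)
    then show ?thesis using True by (simp add: cinner_zero_right)
  next
    case False then show ?thesis by (simp add: coef_def)
  qed
  finally show ?case .
qed

lemma gs_orth': "l \<noteq> i \<Longrightarrow> cinner n (gs a n i) (gs a n l) = 0"
  using gs_orth[of l i] gs_orth[of i l] cinner_cnj[of n "gs a n i" "gs a n l"]
  by (cases "l < i") auto

lemma gs_nrm2_le: "nrm2 n (gs a n i) \<le> nrm2 n (a i)"
proof -
  define s where "s = (\<lambda>k. \<Sum>j<i. coef a n i j * gs a n j k)"
  have ai: "a i = (\<lambda>k. gs a n i k + s k)" using gs_eq[of a n i] unfolding s_def by auto
  have o1: "cinner n (gs a n i) s = 0"
  proof -
    have "cinner n (gs a n i) s = (\<Sum>j<i. cnj (coef a n i j) * cinner n (gs a n i) (gs a n j))"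
      unfolding s_def cinner_def by (simp add: sum_distrib_left sum.swap[of _ "{..<i}"] mult.commute mult.left_commute)
    also have "\<dots> = 0" using gs_orth by (auto intro!: sum.neutral)
    finally show ?thesis .
  qed
  have o2: "cinner n s (gs a n i) = 0" using o1 cinner_cnj[of n s "gs a n i"] by simp
  have "cinner n (a i) (a i) = cinner n (gs a n i) (gs a n i) + cinner n s s + cinner n (gs a n i) s + cinner n s (gs a n i)"
    unfolding ai cinner_def by (simp add: algebra_simps sum.distrib)
  then have "complex_of_real (nrm2 n (a i)) = complex_of_real (nrm2 n (gs a n i) + nrm2 n s)"
    using o1 o2 by (simp add: cinner_self)
  then have "nrm2 n (a i) = nrm2 n (gs a n i) + nrm2 n s" using of_real_eq_iff by blast
  then show ?thesis using nrm2_nonneg[of n s] by simp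
qed

lemma cnj_hom: "comm_ring_hom cnj"
  by unfold_locales auto

lemma det_cnj_transpose:
  assumes "B \<in> carrier_mat n n"
  shows "Determinant.det (map_mat cnj (transpose_mat B)) = cnj (Determinant.det B)"
  using comm_ring_hom.hom_det[OF cnj_hom, of "transpose_mat B"] det_transpose[OF assms] by simp

lemma prod_list_diag:
  assumes "A \<in> carrier_mat n n"
  shows "prod_list (diag_mat A) = (\<Prod>i<n. A $$ (i,i))"
proof -
  have "prod_list (diag_mat A) = prod_list (map (\<lambda>i. A $$ (i,i)) [0..<n])"
    using assms unfolding diag_mat_def by simp
  also have "\<dots> = (\<Prod>i\<in>set [0..<n]. A $$ (i,i))"
    by (rule prod.distinct_set_conv_list[symmetric]) simp
  finally show ?thesis by (simp add: atLeast0LessThan)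
qed

theorem hadamard:
  fixes A :: "complex mat"
  assumes A: "A \<in> carrier_mat n n"
  shows "(cmod (Determinant.det A))^2 \<le> (\<Prod>i<n. \<Sum>k<n. (cmod (A $$ (i,k)))^2)"
proof -
  define a where "a = (\<lambda>i k. A $$ (i,k))"
  define B where "B = mat n n (\<lambda>(i,k). gs a n i k)"
  define L where "L = mat n n (\<lambda>(i,j). if j < i then coef a n i j else if i = j then 1 else 0)"
  have B: "B \<in> carrier_mat n n" and L: "L \<in> carrier_mat n n" unfolding B_def L_def by auto
  have sumL: "(\<Sum>j<n. (if j < i then coef a n i j else if i = j then 1 else 0) * gs a n j k)
      = gs a n i k + (\<Sum>j<i. coef a n i j * gs a n j k)" if "i < n" for i k
  proof -
    let ?f = "\<lambda>j. (if j < i then coef a n i j else if i = j then 1 else 0) * gs a n j k"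
    have e: "{..<n} = {..<i} \<union> insert i {Suc i..<n}" using that by auto
    have "(\<Sum>j<n. ?f j) = (\<Sum>j<i. ?f j) + (\<Sum>j\<in>insert i {Suc i..<n}. ?f j)"
      unfolding e by (rule sum.union_disjoint) auto
    also have "(\<Sum>j\<in>insert i {Suc i..<n}. ?f j) = gs a n i k"
      by (subst sum.insert) (auto intro!: sum.neutral)
    also have "(\<Sum>j<i. ?f j) = (\<Sum>j<i. coef a n i j * gs a n j k)" by (intro sum.cong) auto
    finally show ?thesis by simp
  qed
  have ALB: "A = L * B"
  proof (rule eq_matI)
    fix i k assume ik: "i < dim_row (L * B)" "k < dim_col (L * B)"
    then have i: "i < n" and k: "k < n" using L B by auto
    have "(L * B) $$ (i,k) = (\<Sum>j<n. L $$ (i,j) * B $$ (j,k))"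
      using i k L B by (simp add: scalar_prod_def atLeast0LessThan)
    also have "\<dots> = (\<Sum>j<n. (if j < i then coef a n i j else if i = j then 1 else 0) * gs a n j k)"
      using i k unfolding L_def B_def by (intro sum.cong) auto
    also have "\<dots> = a i k" using sumL[OF i] gs_eq[of a n i] by simp
    finally show "A $$ (i,k) = (L * B) $$ (i,k)" unfolding a_def by simp
  qed (use A L B in auto)
  have detL: "Determinant.det L = 1"
  proof -
    have "Determinant.det L = prod_list (diag_mat L)"
      by (rule det_lower_triangular[OF _ L]) (auto simp: L_def)
    also have "\<dots> = 1" using prod_list_diag[OF L] by (simp add: L_def)
    finally show ?thesis .
  qed
  have detA: "Determinant.det A = Determinant.det B"
    using ALB det_mult[OF L B] detL by simp
  define BH where "BH = map_mat cnj (transpose_mat B)"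
  have BH: "BH \<in> carrier_mat n n" using B unfolding BH_def by auto
  have G: "(B * BH) $$ (i,j) = cinner n (gs a n i) (gs a n j)" if "i < n" "j < n" for i j
    using that B BH unfolding BH_def B_def by (simp add: scalar_prod_def cinner_def atLeast0LessThan)
  have "Determinant.det (B * BH) = prod_list (diag_mat (B * BH))"
    by (rule det_upper_triangular) (use B BH G gs_orth' in \<open>auto simp: upper_triangular_def\<close>)
  also have "\<dots> = (\<Prod>i<n. cinner n (gs a n i) (gs a n i))"
    using prod_list_diag[of "B * BH" n] B BH G by simp
  also have "\<dots> = complex_of_real (\<Prod>i<n. nrm2 n (gs a n i))"
    by (simp add: cinner_self)
  finally have e1: "Determinant.det (B * BH) = complex_of_real (\<Prod>i<n. nrm2 n (gs a n i))" .
  have "Determinant.det (B * BH) = Determinant.det B * cnj (Determinant.det B)"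
    using det_mult[OF B BH] det_cnj_transpose[OF B] unfolding BH_def by simp
  also have "\<dots> = complex_of_real ((cmod (Determinant.det B))^2)"
    by (simp add: complex_mult_cnj cmod_power2 del: of_real_power)
  finally have "(cmod (Determinant.det B))^2 = (\<Prod>i<n. nrm2 n (gs a n i))"
    using e1 of_real_eq_iff by metis
  also have "\<dots> \<le> (\<Prod>i<n. nrm2 n (a i))"
    by (intro prod_mono) (auto simp: nrm2_nonneg gs_nrm2_le)
  finally show ?thesis using detA unfolding nrm2_def a_def by simp
qed


lemma det_rowscale:
  fixes A :: "'a::comm_ring_1 mat"
  assumes A: "A \<in> carrier_mat m m"
  shows "Determinant.det (mat m m (\<lambda>(i,k). c i * A $$ (i,k))) = (\<Prod>i<m. c i) * Determinant.det A"
proof -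
  define Dg where "Dg = mat m m (\<lambda>(i,j). if i = j then c i else (0::'a))"
  have Dg: "Dg \<in> carrier_mat m m" unfolding Dg_def by auto
  have e: "mat m m (\<lambda>(i,k). c i * A $$ (i,k)) = Dg * A"
  proof (rule eq_matI)
    fix i k assume "i < dim_row (Dg * A)" "k < dim_col (Dg * A)"
    then have i: "i < m" and k: "k < m" using A Dg by auto
    have "(Dg * A) $$ (i,k) = (\<Sum>j\<in>{0..<m}. Dg $$ (i,j) * A $$ (j,k))"
      using i k A Dg by (simp add: scalar_prod_def)
    also have "\<dots> = (\<Sum>j\<in>{0..<m}. (if j = i then c i * A $$ (i,k) else 0))"
      using i by (intro sum.cong) (auto simp: Dg_def)
    also have "\<dots> = c i * A $$ (i,k)" using i by simp
    finally show "mat m m (\<lambda>(i,k). c i * A $$ (i,k)) $$ (i,k) = (Dg * A) $$ (i,k)" using i k by simp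
  qed (use A Dg in auto)
  have "Determinant.det Dg = prod_list (diag_mat Dg)"
    by (rule det_upper_triangular[OF _ Dg]) (auto simp: Dg_def upper_triangular_def)
  also have "\<dots> = (\<Prod>i<m. c i)" using prod_list_diag[OF Dg] by (simp add: Dg_def)
  finally show ?thesis using e det_mult[OF Dg A] by simp
qed

definition vdm :: "'a::comm_ring_1 list \<Rightarrow> 'a mat" where
  "vdm zs = mat (length zs) (length zs) (\<lambda>(i,k). zs ! i ^ k)"

lemma vdm_carrier[simp]: "vdm zs \<in> carrier_mat (length zs) (length zs)"
  unfolding vdm_def by auto

theorem det_vdm: "Determinant.det (vdm zs) = (\<Prod>j<length zs. \<Prod>i<j. (zs ! j - zs ! i))"
proof (induction zs)
  case Nil
  then show ?case unfolding vdm_def by (simp add: det_dim_zero)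
next
  case (Cons z zs)
  define m where "m = length zs"
  define n where "n = Suc m"
  define V where "V = vdm (z # zs)"
  define U where "U = mat n n (\<lambda>(i,k). if i = k then 1 else if Suc i = k then - z else 0)"
  have V: "V \<in> carrier_mat n n" unfolding V_def n_def m_def vdm_def by simp
  have U: "U \<in> carrier_mat n n" unfolding U_def by auto
  have detU: "Determinant.det U = 1"
  proof -
    have "Determinant.det U = prod_list (diag_mat U)"
      by (rule det_upper_triangular[OF _ U]) (auto simp: U_def upper_triangular_def)
    also have "\<dots> = 1" using prod_list_diag[OF U] by (simp add: U_def)
    finally show ?thesis .
  qed
  define C where "C = V * U"
  have C: "C \<in> carrier_mat n n" unfolding C_def using V U by auto
  have Cent: "C $$ (i,k) = (if k = 0 then 1 else (z # zs) ! i ^ k - z * (z # zs) ! i ^ (k - 1))"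
    if i: "i < n" and k: "k < n" for i k
  proof -
    have "C $$ (i,k) = (\<Sum>j\<in>{0..<n}. V $$ (i,j) * U $$ (j,k))"
      unfolding C_def using i k V U by (simp add: scalar_prod_def)
    also have "\<dots> = (\<Sum>j\<in>{0..<n}. (if j = k then (z # zs) ! i ^ k else 0) +
        (if Suc j = k then - z * (z # zs) ! i ^ j else 0))"
      using i k by (intro sum.cong) (auto simp: V_def U_def vdm_def n_def m_def)
    also have "\<dots> = (if k = 0 then 1 else (z # zs) ! i ^ k - z * (z # zs) ! i ^ (k - 1))"
    proof (cases k)
      case 0 then show ?thesis using k by (simp add: sum.distrib)
    next
      case (Suc k')
      then have "(\<Sum>j\<in>{0..<n}. (if Suc j = k then - z * (z # zs) ! i ^ j else 0)) = - z * (z # zs) ! i ^ k'"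
        using k by (simp add: sum.delta')
      then show ?thesis using k Suc by (simp add: sum.distrib)
    qed
    finally show ?thesis .
  qed
  have detC: "Determinant.det C = Determinant.det V"
    using det_mult[OF V U] detU unfolding C_def by simp
  have "Determinant.det C = (\<Sum>j<n. C $$ (0,j) * cofactor C 0 j)"
    by (rule laplace_expansion_row[OF C]) (simp add: n_def)
  also have "\<dots> = C $$ (0,0) * cofactor C 0 0 + (\<Sum>j\<in>{..<n} - {0}. C $$ (0,j) * cofactor C 0 j)"
    by (subst sum.remove[of _ 0]) (auto simp: n_def)
  also have "(\<Sum>j\<in>{..<n} - {0}. C $$ (0,j) * cofactor C 0 j) = 0"
  proof (rule sum.neutral, rule ballI)
    fix j assume "j \<in> {..<n} - {0}"
    then show "C $$ (0,j) * cofactor C 0 j = 0"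
      by (cases j) (auto simp: Cent n_def)
  qed
  also have "C $$ (0,0) = 1" using Cent[of 0 0] by (simp add: n_def)
  also have "cofactor C 0 0 = Determinant.det (mat_delete C 0 0)" by (simp add: cofactor_def)
  also have "mat_delete C 0 0 = mat m m (\<lambda>(i,k). (zs ! i - z) * vdm zs $$ (i,k))"
  proof (rule eq_matI)
    fix i k assume "i < dim_row (mat m m (\<lambda>(i,k). (zs ! i - z) * vdm zs $$ (i,k)))"
      "k < dim_col (mat m m (\<lambda>(i,k). (zs ! i - z) * vdm zs $$ (i,k)))"
    then have i: "i < m" and k: "k < m" by auto
    have "mat_delete C 0 0 $$ (i,k) = C $$ (Suc i, Suc k)"
      unfolding mat_delete_def using C i k by (simp add: n_def)
    also have "\<dots> = (zs ! i - z) * zs ! i ^ k"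
      using Cent[of "Suc i" "Suc k"] i k by (simp add: n_def algebra_simps)
    finally show "mat_delete C 0 0 $$ (i,k) = mat m m (\<lambda>(i,k). (zs ! i - z) * vdm zs $$ (i,k)) $$ (i,k)"
      using i k by (simp add: vdm_def m_def)
  qed (use C in \<open>auto simp: n_def\<close>)
  also have "Determinant.det \<dots> = (\<Prod>i<m. zs ! i - z) * Determinant.det (vdm zs)"
    by (rule det_rowscale) (simp add: m_def)
  finally have "Determinant.det V = (\<Prod>i<m. zs ! i - z) * (\<Prod>j<m. \<Prod>i<j. (zs ! j - zs ! i))"
    using detC Cons.IH by (simp add: m_def)
  also have "\<dots> = (\<Prod>j<length (z # zs). \<Prod>i<j. ((z # zs) ! j - (z # zs) ! i))"
  proof -
    have "(\<Prod>j<length (z # zs). \<Prod>i<j. ((z # zs) ! j - (z # zs) ! i)) =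
      (\<Prod>j<Suc m. \<Prod>i<j. ((z # zs) ! j - (z # zs) ! i))" by (simp add: m_def)
    also have "\<dots> = (\<Prod>j<m. \<Prod>i<Suc j. (zs ! j - (z # zs) ! i))"
      by (subst prod.lessThan_Suc_shift) simp
    also have "\<dots> = (\<Prod>j<m. (zs ! j - z) * (\<Prod>i<j. (zs ! j - zs ! i)))"
      by (intro prod.cong refl, subst prod.lessThan_Suc_shift) simp
    finally show ?thesis by (simp add: prod.distrib)
  qed
  finally show ?case unfolding V_def .
qed


lemma pow_diff_bound:
  fixes a b :: complex
  assumes "cmod a \<le> 1" "cmod b \<le> 1"
  shows "cmod (a ^ j - b ^ j) \<le> real j * cmod (a - b)"
proof -
  have "cmod (\<Sum>i<j. b ^ (j - Suc i) * a ^ i) \<le> (\<Sum>i<j. cmod (b ^ (j - Suc i) * a ^ i))"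
    by (rule norm_sum)
  also have "\<dots> \<le> (\<Sum>i<j. 1)"
    by (intro sum_mono) (auto simp: norm_mult norm_power intro!: mult_le_one power_le_one assms)
  finally have S: "cmod (\<Sum>i<j. b ^ (j - Suc i) * a ^ i) \<le> real j" by simp
  have "cmod (a ^ j - b ^ j) = cmod (a - b) * cmod (\<Sum>i<j. b ^ (j - Suc i) * a ^ i)"
    by (subst power_diff_sumr2) (simp add: norm_mult)
  also have "\<dots> \<le> cmod (a - b) * real j" by (rule mult_left_mono[OF S]) simp
  finally show ?thesis by (simp add: mult.commute)
qed

definition yy :: "complex \<Rightarrow> complex" where "yy z = (if cmod z \<le> 1 then 1 else 1 / z)"
definition xx :: "complex \<Rightarrow> complex" where "xx z = z * yy z"
definition mu :: "complex \<Rightarrow> real" where "mu z = max 1 (cmod z)"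

lemma yy_norm: "cmod (yy z) = 1 / mu z"
  by (auto simp: yy_def mu_def norm_divide)

lemma yy_le1: "cmod (yy z) \<le> 1"
  by (auto simp: yy_def norm_divide divide_le_eq_1)

lemma xx_le1: "cmod (xx z) \<le> 1"
  by (auto simp: xx_def yy_def norm_divide norm_mult)

lemma yy_nz: "yy z \<noteq> 0"
  using yy_norm[of z] by (auto simp: mu_def)

lemma hent: "k \<le> m \<Longrightarrow> yy z ^ m * z ^ k = yy z ^ (m - k) * xx z ^ k"
  by (simp add: xx_def power_mult_distrib power_add[symmetric])

lemma hent_le1: "k \<le> m \<Longrightarrow> cmod (yy z ^ m * z ^ k) \<le> 1"
  by (subst hent) (auto simp: norm_mult norm_power intro!: mult_le_one power_le_one xx_le1 yy_le1)

definition lam :: "nat \<Rightarrow> complex \<Rightarrow> complex \<Rightarrow> complex" where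
  "lam m v w = (if cmod w \<le> 1 then yy v ^ m else xx v ^ m)"

definition bnd :: "nat \<Rightarrow> complex \<Rightarrow> nat \<Rightarrow> real" where
  "bnd m w k = (if cmod w \<le> 1 then real k else real (m - k))"

lemma rowop_bound:
  assumes "k \<le> m"
  shows "cmod (yy v ^ m * v ^ k - lam m v w * (yy w ^ m * w ^ k)) \<le> bnd m w k * cmod (v - w)"
proof (cases "cmod w \<le> 1")
  case True
  then have yw: "yy w = 1" by (simp add: yy_def)
  have "yy v ^ m * v ^ k - lam m v w * (yy w ^ m * w ^ k) = yy v ^ (m - k) * (xx v ^ k - (yy v * w) ^ k)"
    using True yw assms by (simp add: lam_def hent right_diff_distrib power_mult_distrib power_add[symmetric] mult.assoc)
  also have "cmod \<dots> \<le> 1 * (real k * cmod (xx v - yy v * w))"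
    unfolding norm_mult norm_power
    by (intro mult_mono pow_diff_bound power_le_one) (auto simp: xx_le1 yy_le1 norm_mult True intro: mult_le_one)
  also have "xx v - yy v * w = yy v * (v - w)" by (simp add: xx_def algebra_simps)
  also have "real k * cmod (yy v * (v - w)) \<le> real k * cmod (v - w)"
    by (intro mult_left_mono) (auto simp: norm_mult intro!: mult_left_le_one_le yy_le1)
  finally show ?thesis using True by (simp add: bnd_def)
next
  case False
  then have yw: "yy w = 1 / w" and w0: "w \<noteq> 0" by (auto simp: yy_def)
  have xw: "xx w = 1" using w0 by (simp add: xx_def yw)
  have h1: "yy w ^ m * w ^ k = yy w ^ (m - k)" using hent[OF assms, of w] xw by simp
  have h2: "yy v ^ m * v ^ k = yy v ^ (m - k) * xx v ^ k" using hent[OF assms, of v] .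
  have h3: "xx v ^ m = xx v ^ k * xx v ^ (m - k)" using assms by (simp add: power_add[symmetric])
  have "yy v ^ m * v ^ k - lam m v w * (yy w ^ m * w ^ k) = xx v ^ k * (yy v ^ (m - k) - (xx v * yy w) ^ (m - k))"
    using False unfolding lam_def h1 h2 h3 power_mult_distrib by (simp add: algebra_simps)
  also have "cmod \<dots> \<le> 1 * (real (m - k) * cmod (yy v - xx v * yy w))"
    unfolding norm_mult norm_power
    by (intro mult_mono pow_diff_bound power_le_one) (auto simp: xx_le1 yy_le1 norm_mult intro: mult_le_one)
  also have "yy v - xx v * yy w = yy v * (w - v) / w" using w0 by (simp add: xx_def yw field_simps)
  also have "real (m - k) * cmod (yy v * (w - v) / w) \<le> real (m - k) * cmod (v - w)"
  proof -
    have "cmod (yy v * (w - v) / w) = cmod (yy v) * cmod (v - w) / cmod w"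
      by (simp add: norm_mult norm_divide norm_minus_commute)
    also have "\<dots> \<le> cmod (v - w)"
    proof -
      have "cmod (yy v) * cmod (v - w) \<le> 1 * (cmod (v - w) * cmod w)"
        using False yy_le1[of v] by (intro mult_mono) (auto intro: mult_le_cancel_left1[THEN iffD2])
      then show ?thesis using False by (simp add: divide_le_eq)
    qed
    finally show ?thesis by (intro mult_left_mono) auto
  qed
  finally show ?thesis using False by (simp add: bnd_def)
qed

lemma sum_sq_le: "(\<Sum>k<n. (real k)^2) \<le> real n ^ 3 / 3"
proof (induction n)
  case 0 then show ?case by simp
next
  case (Suc n)
  have "(\<Sum>k<Suc n. (real k)^2) = (\<Sum>k<n. (real k)^2) + (real n)^2" by simp
  also have "\<dots> \<le> real n ^ 3 / 3 + (real n)^2" using Suc by simp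
  also have "\<dots> \<le> real (Suc n) ^ 3 / 3" by (simp add: power3_eq_cube power2_eq_square field_simps)
  finally show ?case .
qed

lemma bnd_sum: "(\<Sum>k<Suc m. (bnd m w k)^2) \<le> real (Suc m) ^ 3 / 3"
proof (cases "cmod w \<le> 1")
  case True then show ?thesis using sum_sq_le[of "Suc m"] by (simp add: bnd_def)
next
  case False
  have "(\<Sum>k<Suc m. (bnd m w k)^2) = (\<Sum>k<Suc m. (real (Suc m - Suc k))^2)"
    using False by (intro sum.cong) (auto simp: bnd_def)
  also have "\<dots> = (\<Sum>k<Suc m. (real k)^2)"
    by (rule sum.nat_diff_reindex[where g = "\<lambda>k. (real k)^2"])
  finally show ?thesis using sum_sq_le[of "Suc m"] by simp
qed

definition hmat :: "complex list \<Rightarrow> complex mat" where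
  "hmat zs = mat (length zs) (length zs) (\<lambda>(i,k). yy (zs ! i) ^ (length zs - 1) * (zs ! i) ^ k)"

lemma hmat_carrier[simp]: "hmat zs \<in> carrier_mat (length zs) (length zs)"
  unfolding hmat_def by auto

lemma det_hmat: "Determinant.det (hmat zs) = (\<Prod>i<length zs. yy (zs ! i) ^ (length zs - 1)) * Determinant.det (vdm zs)"
proof -
  have "hmat zs = mat (length zs) (length zs) (\<lambda>(i,k). yy (zs ! i) ^ (length zs - 1) * vdm zs $$ (i,k))"
    unfolding hmat_def vdm_def by (rule eq_matI) auto
  then show ?thesis using det_rowscale[OF vdm_carrier[of zs]] by simp
qed

lemma scheme:
  assumes T: "T \<subseteq> {..<length zs}" and pn: "\<And>i. i \<in> T \<Longrightarrow> p i < length zs"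
    and dir: "(\<forall>i\<in>T. i < p i) \<or> (\<forall>i\<in>T. p i < i)"
  shows "(cmod (Determinant.det (hmat zs)))^2 \<le>
    (\<Prod>i\<in>T. (cmod (zs ! i - zs ! p i))^2) * (real (length zs) ^ 3 / 3) ^ card T * real (length zs) ^ (length zs - card T)"
proof -
  have p: "p i \<noteq> i \<and> p i < length zs" if "i \<in> T" for i
    using pn[OF that] dir that by auto
  define n where "n = length zs"
  define m where "m = n - 1"
  define H where "H = hmat zs"
  define l where "l = (\<lambda>i. lam m (zs ! i) (zs ! p i))"
  define N where "N = mat n n (\<lambda>(i,j). if i = j then 1 else if i \<in> T \<and> j = p i then - l i else 0)"
  have H: "H \<in> carrier_mat n n" unfolding H_def n_def by simp
  have N: "N \<in> carrier_mat n n" unfolding N_def by auto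
  have Hent: "H $$ (i,k) = yy (zs ! i) ^ m * (zs ! i) ^ k" if "i < n" "k < n" for i k
    using that unfolding H_def hmat_def m_def n_def by simp
  have detN: "Determinant.det N = 1"
  proof -
    have "Determinant.det N = prod_list (diag_mat N)"
    proof (cases "\<forall>i\<in>T. i < p i")
      case True
      show ?thesis
        by (rule det_upper_triangular[OF _ N]) (use True in \<open>auto simp: N_def upper_triangular_def\<close>)
    next
      case False
      then have F: "\<forall>i\<in>T. p i < i" using dir by auto
      show ?thesis
        by (rule det_lower_triangular[OF _ N]) (use F in \<open>auto simp: N_def\<close>)
    qed
    also have "\<dots> = 1" using prod_list_diag[OF N] by (simp add: N_def)
    finally show ?thesis .
  qed
  have NH: "(N * H) $$ (i,k) = H $$ (i,k) - (if i \<in> T then l i * H $$ (p i, k) else 0)"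
    if i: "i < n" and k: "k < n" for i k
  proof -
    have "(N * H) $$ (i,k) = (\<Sum>j\<in>{0..<n}. N $$ (i,j) * H $$ (j,k))"
      using i k N H by (simp add: scalar_prod_def)
    also have "\<dots> = (\<Sum>j\<in>{0..<n}. (if j = i then H $$ (i,k) else 0) +
        (if j = p i then (if i \<in> T then - l i * H $$ (j,k) else 0) else 0))"
      using i k p[of i] by (intro sum.cong) (auto simp: N_def)
    also have "\<dots> = H $$ (i,k) - (if i \<in> T then l i * H $$ (p i, k) else 0)"
      using i p[of i] by (simp add: sum.distrib n_def)
    finally show ?thesis .
  qed
  have NHc: "N * H \<in> carrier_mat n n" using N H by auto
  have det_eq: "Determinant.det (N * H) = Determinant.det H"
    using det_mult[OF N H] detN by simp
  have rowT: "(\<Sum>k<n. (cmod ((N * H) $$ (i,k)))^2) \<le> (cmod (zs ! i - zs ! p i))^2 * (real n ^ 3 / 3)"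
    if iT: "i \<in> T" for i
  proof -
    have i: "i < n" and pi: "p i < n" using p[OF iT] T iT n_def by auto
    then have nS: "n = Suc m" unfolding m_def by simp
    have "(\<Sum>k<n. (cmod ((N * H) $$ (i,k)))^2) \<le> (\<Sum>k<n. (bnd m (zs ! p i) k * cmod (zs ! i - zs ! p i))^2)"
    proof (intro sum_mono power_mono)
      fix k assume "k \<in> {..<n}"
      then have k: "k < n" by simp
      have "(N * H) $$ (i,k) = yy (zs ! i) ^ m * (zs ! i) ^ k - lam m (zs ! i) (zs ! p i) * (yy (zs ! p i) ^ m * (zs ! p i) ^ k)"
        using NH[OF i k] iT Hent[OF i k] Hent[OF pi k] by (simp add: l_def)
      then show "cmod ((N * H) $$ (i,k)) \<le> bnd m (zs ! p i) k * cmod (zs ! i - zs ! p i)"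
        using rowop_bound[of k m "zs ! i" "zs ! p i"] k nS by simp
    qed simp
    also have "\<dots> = (cmod (zs ! i - zs ! p i))^2 * (\<Sum>k<Suc m. (bnd m (zs ! p i) k)^2)"
      unfolding nS power_mult_distrib sum_distrib_left by (simp add: mult.commute)
    also have "\<dots> \<le> (cmod (zs ! i - zs ! p i))^2 * (real n ^ 3 / 3)"
      using bnd_sum[of m "zs ! p i"] nS by (intro mult_left_mono) auto
    finally show ?thesis .
  qed
  have rowN: "(\<Sum>k<n. (cmod ((N * H) $$ (i,k)))^2) \<le> real n" if i: "i < n" and iT: "i \<notin> T" for i
  proof -
    have "(\<Sum>k<n. (cmod ((N * H) $$ (i,k)))^2) \<le> (\<Sum>k<n. 1)"
    proof (intro sum_mono)
      fix k assume "k \<in> {..<n}"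
      then have k: "k < n" by simp
      have "cmod ((N * H) $$ (i,k)) \<le> 1"
        using NH[OF i k] iT Hent[OF i k] hent_le1[of k m "zs ! i"] k by (simp add: m_def)
      then show "(cmod ((N * H) $$ (i,k)))^2 \<le> 1" by (simp add: power_le_one)
    qed
    then show ?thesis by simp
  qed
  have Tn: "T \<subseteq> {..<n}" using T n_def by simp
  define c where "c = real n ^ 3 / 3"
  have "(cmod (Determinant.det H))^2 \<le> (\<Prod>i<n. \<Sum>k<n. (cmod ((N * H) $$ (i,k)))^2)"
    using hadamard[OF NHc] det_eq by simp
  also have "\<dots> = (\<Prod>i\<in>{..<n} - T. \<Sum>k<n. (cmod ((N * H) $$ (i,k)))^2) * (\<Prod>i\<in>T. \<Sum>k<n. (cmod ((N * H) $$ (i,k)))^2)"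
    by (rule prod.subset_diff[OF Tn]) simp
  also have "\<dots> \<le> (\<Prod>i\<in>{..<n} - T. real n) * (\<Prod>i\<in>T. (cmod (zs ! i - zs ! p i))^2 * c)"
    unfolding c_def by (intro mult_mono prod_mono conjI rowT rowN prod_nonneg sum_nonneg) auto
  also have "\<dots> = (\<Prod>i\<in>T. (cmod (zs ! i - zs ! p i))^2) * c ^ card T * real n ^ (n - card T)"
    using Tn by (simp only: prod.distrib prod_constant card_Diff_subset finite_subset finite_lessThan card_lessThan mult_ac)
  finally have "(cmod (Determinant.det H))^2 \<le> (\<Prod>i\<in>T. (cmod (zs ! i - zs ! p i))^2) * c ^ card T * real n ^ (n - card T)" .
  then show ?thesis unfolding H_def n_def c_def .
qed


definition DRset :: "complex set \<Rightarrow> real" where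
  "DRset S = (\<Prod>p\<in>{(v,w). v \<in> S \<and> w \<in> S \<and> v \<noteq> w}. cmod (fst p - snd p))"

lemma pairs_lt_sq:
  fixes I :: "nat set" and f :: "nat \<Rightarrow> complex"
  assumes I: "finite I" and inj: "inj_on f I"
  shows "(\<Prod>p\<in>{(i,j). i \<in> I \<and> j \<in> I \<and> i < j}. (cmod (f (fst p) - f (snd p)))^2) = DRset (f ` I)"
proof -
  define c where "c = (\<lambda>p. cmod (f (fst p) - f (snd p)))"
  define L where "L = {(i,j). i \<in> I \<and> j \<in> I \<and> i < j}"
  define G where "G = {(i,j). i \<in> I \<and> j \<in> I \<and> j < i}"
  define OD where "OD = {(i,j). i \<in> I \<and> j \<in> I \<and> i \<noteq> j}"
  have fin: "finite L" "finite G" "finite OD"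
    using I unfolding L_def G_def OD_def by (auto intro: finite_subset[of _ "I \<times> I"])
  have OLG: "OD = L \<union> G" unfolding OD_def L_def G_def by auto
  have G_eq: "G = prod.swap ` L" unfolding G_def L_def by auto
  have "prod c G = prod (c \<circ> prod.swap) L"
    unfolding G_eq by (rule prod.reindex) (auto simp: inj_on_def)
  also have "\<dots> = prod c L" unfolding c_def by (intro prod.cong) (auto simp: norm_minus_commute)
  finally have cG: "prod c G = prod c L" .
  have "prod c OD = prod c L * prod c G"
    unfolding OLG by (rule prod.union_disjoint) (use fin in \<open>auto simp: L_def G_def\<close>)
  then have cO: "prod c OD = (\<Prod>p\<in>L. (c p)^2)"
    using cG by (simp add: power2_eq_square prod.distrib)
  have inj2: "inj_on (map_prod f f) OD"
    using inj unfolding OD_def inj_on_def by auto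
  have img: "{(v,w). v \<in> f ` I \<and> w \<in> f ` I \<and> v \<noteq> w} = map_prod f f ` OD"
  proof (intro Set.set_eqI iffI)
    fix x assume "x \<in> {(v,w). v \<in> f ` I \<and> w \<in> f ` I \<and> v \<noteq> w}"
    then obtain a b where x: "x = (a,b)" "a \<in> f ` I" "b \<in> f ` I" "a \<noteq> b" by auto
    then obtain i j where "i \<in> I" "j \<in> I" "a = f i" "b = f j" by auto
    then show "x \<in> map_prod f f ` OD" using x unfolding OD_def by force
  next
    fix x assume "x \<in> map_prod f f ` OD"
    then obtain i j where "x = (f i, f j)" "i \<in> I" "j \<in> I" "i \<noteq> j" unfolding OD_def by auto
    then show "x \<in> {(v,w). v \<in> f ` I \<and> w \<in> f ` I \<and> v \<noteq> w}"
      using inj unfolding inj_on_def by auto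
  qed
  have "DRset (f ` I) = prod (\<lambda>p. cmod (fst p - snd p)) (map_prod f f ` OD)"
    unfolding DRset_def img ..
  also have "\<dots> = prod c OD"
    by (subst prod.reindex[OF inj2]) (auto simp: c_def intro!: prod.cong)
  finally show ?thesis using cO unfolding L_def c_def by simp
qed

lemma vdm_DR:
  assumes "distinct zs"
  shows "(cmod (Determinant.det (vdm zs)))^2 = DRset (set zs)"
proof -
  define n where "n = length zs"
  define c where "c = (\<lambda>p. cmod (zs ! fst p - zs ! snd p))"
  have "cmod (Determinant.det (vdm zs)) = (\<Prod>j<n. \<Prod>i<j. cmod (zs ! j - zs ! i))"
    unfolding det_vdm n_def by (simp add: prod_norm)
  also have "\<dots> = (\<Prod>(j,i)\<in>Sigma {..<n} (\<lambda>j. {..<j}). cmod (zs ! j - zs ! i))"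
    by (rule prod.Sigma) auto
  also have "\<dots> = prod c (prod.swap ` Sigma {..<n} (\<lambda>j. {..<j}))"
    by (subst prod.reindex) (auto simp: inj_on_def c_def norm_minus_commute intro!: prod.cong)
  also have "prod.swap ` Sigma {..<n} (\<lambda>j. {..<j}) = {(i,j). i \<in> {..<n} \<and> j \<in> {..<n} \<and> i < j}"
    by auto
  finally have e: "cmod (Determinant.det (vdm zs)) = prod c {(i,j). i \<in> {..<n} \<and> j \<in> {..<n} \<and> i < j}" .
  have "(cmod (Determinant.det (vdm zs)))^2 = (\<Prod>p\<in>{(i,j). i \<in> {..<n} \<and> j \<in> {..<n} \<and> i < j}. (c p)^2)"
    unfolding e prod_power_distrib ..
  also have "\<dots> = DRset ((!) zs ` {..<n})"
    unfolding c_def by (rule pairs_lt_sq) (use assms in \<open>auto simp: n_def intro: inj_on_nth\<close>)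
  also have "(!) zs ` {..<n} = set zs" unfolding n_def by (auto simp: in_set_conv_nth)
  finally show ?thesis .
qed

lemma mu_pos: "mu v > 0" by (simp add: mu_def)

lemma DR_bound:
  fixes R V' :: "complex set" and w :: "complex \<Rightarrow> complex"
  assumes zs: "distinct zs" "set zs = R" and V': "V' \<subseteq> R"
    and w: "\<And>v. v \<in> V' \<Longrightarrow> w v \<in> R \<and> w v \<noteq> v"
  shows "(DRset R)^2 \<le> (\<Prod>v\<in>R. mu v ^ (2*(length zs - 1)))^2 * (\<Prod>v\<in>V'. cmod (v - w v))^2
     * (real (length zs)^3/3)^card V' * real (length zs) ^ (2*length zs - card V')"
proof -
  define n where "n = length zs"
  define c where "c = real n ^ 3 / 3"
  define idx where "idx = the_inv_into {..<n} ((!) zs)"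
  have bij: "bij_betw ((!) zs) {..<n} R" using zs unfolding n_def by (intro bij_betw_nth) auto
  have inj: "inj_on ((!) zs) {..<n}" using bij by (rule bij_betw_imp_inj_on)
  have img: "(!) zs ` {..<n} = R" using bij by (rule bij_betw_imp_surj_on)
  have idx_in: "idx v < n \<and> zs ! idx v = v" if "v \<in> R" for v
    using that the_inv_into_into[OF inj, of v "{..<n}"] f_the_inv_into_f[OF inj, of v] img
    unfolding idx_def by auto
  have finR: "finite R" using zs by auto
  have cardR: "card R = n" using zs distinct_card unfolding n_def by metis
  have inj_idx: "inj_on idx R" by (rule inj_on_inverseI[where g = "(!) zs"]) (use idx_in in auto)
  define H2 where "H2 = (cmod (Determinant.det (hmat zs)))^2"
  have half: "H2 \<le> (\<Prod>v\<in>V1. (cmod (v - w v))^2) * c ^ card V1 * real n ^ (n - card V1)"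
    if V1: "V1 \<subseteq> V'" and d: "(\<forall>v\<in>V1. idx v < idx (w v)) \<or> (\<forall>v\<in>V1. idx (w v) < idx v)" for V1
  proof -
    define T where "T = idx ` V1"
    define p where "p = (\<lambda>i. idx (w (zs ! i)))"
    have V1R: "V1 \<subseteq> R" using V1 V' by auto
    have Tn: "T \<subseteq> {..<length zs}" using idx_in V1R unfolding T_def n_def by auto
    have pT: "p (idx v) = idx (w v)" "zs ! idx v = v" if "v \<in> V1" for v
      using idx_in[of v] V1R that unfolding p_def by auto
    have pn: "p i < length zs" if "i \<in> T" for i
      using that idx_in w V1 pT unfolding T_def n_def by auto
    have dir: "(\<forall>i\<in>T. i < p i) \<or> (\<forall>i\<in>T. p i < i)"
      using d pT unfolding T_def by auto
    have "H2 \<le> (\<Prod>i\<in>T. (cmod (zs ! i - zs ! p i))^2) * c ^ card T * real n ^ (n - card T)"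
      using scheme[OF Tn pn dir] unfolding H2_def c_def n_def by simp
    also have "(\<Prod>i\<in>T. (cmod (zs ! i - zs ! p i))^2) = (\<Prod>v\<in>V1. (cmod (v - w v))^2)"
      unfolding T_def
      by (subst prod.reindex) (use inj_on_subset[OF inj_idx V1R] pT idx_in w V1 in \<open>auto intro!: prod.cong\<close>)
    also have "card T = card V1" unfolding T_def using inj_on_subset[OF inj_idx V1R] by (rule card_image)
    finally show ?thesis .
  qed
  define V1 where "V1 = {v \<in> V'. idx v < idx (w v)}"
  define V2 where "V2 = {v \<in> V'. idx (w v) < idx v}"
  have neq: "idx v \<noteq> idx (w v)" if "v \<in> V'" for v
    using w[OF that] that V' inj_idx unfolding inj_on_def by (metis subsetD)
  have UV: "V' = V1 \<union> V2" using neq unfolding V1_def V2_def by force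
  have disj: "V1 \<inter> V2 = {}" unfolding V1_def V2_def by auto
  have finV: "finite V1" "finite V2" using finR V' unfolding V1_def V2_def by (auto intro: finite_subset)
  have cardV: "card V' = card V1 + card V2" using UV disj finV card_Un_disjoint by metis
  have c1: "card V1 \<le> n" "card V2 \<le> n"
    using cardR V' finR unfolding V1_def V2_def by (auto intro!: card_mono order.trans[OF _ card_mono[OF finR V']] intro: finite_subset)
  have h1: "H2 \<le> (\<Prod>v\<in>V1. (cmod (v - w v))^2) * c ^ card V1 * real n ^ (n - card V1)"
    by (rule half) (auto simp: V1_def)
  have h2: "H2 \<le> (\<Prod>v\<in>V2. (cmod (v - w v))^2) * c ^ card V2 * real n ^ (n - card V2)"
    by (rule half) (auto simp: V2_def)
  have H2nn: "H2 \<ge> 0" unfolding H2_def by simp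
  have "H2 * H2 \<le> ((\<Prod>v\<in>V1. (cmod (v - w v))^2) * c ^ card V1 * real n ^ (n - card V1)) *
      ((\<Prod>v\<in>V2. (cmod (v - w v))^2) * c ^ card V2 * real n ^ (n - card V2))"
    by (rule mult_mono[OF h1 h2 _ H2nn]) (simp add: c_def prod_nonneg)
  also have "\<dots> = ((\<Prod>v\<in>V1. (cmod (v - w v))^2) * (\<Prod>v\<in>V2. (cmod (v - w v))^2)) * (c ^ card V1 * c ^ card V2)
      * (real n ^ (n - card V1) * real n ^ (n - card V2))" by (simp only: mult_ac)
  also have "\<dots> = (\<Prod>v\<in>V'. (cmod (v - w v))^2) * c ^ card V' * real n ^ (2 * n - card V')"
  proof -
    have "(\<Prod>v\<in>V1. (cmod (v - w v))^2) * (\<Prod>v\<in>V2. (cmod (v - w v))^2) = (\<Prod>v\<in>V'. (cmod (v - w v))^2)"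
      unfolding UV by (rule prod.union_disjoint[symmetric]) (use finV disj in auto)
    moreover have "c ^ card V1 * c ^ card V2 = c ^ card V'" by (simp add: cardV power_add)
    moreover have "real n ^ (n - card V1) * real n ^ (n - card V2) = real n ^ (2 * n - card V')"
      using c1 by (simp add: cardV power_add[symmetric] mult_2)
    ultimately show ?thesis by simp
  qed
  finally have HH: "H2 * H2 \<le> (\<Prod>v\<in>V'. cmod (v - w v))^2 * c ^ card V' * real n ^ (2 * n - card V')"
    by (simp add: prod_power_distrib)
  define Pm where "Pm = (\<Prod>v\<in>R. mu v ^ (2*(n - 1)))"
  have "H2 = (\<Prod>i<n. (cmod (yy (zs ! i)))^(2*(n-1))) * (cmod (Determinant.det (vdm zs)))^2"
    unfolding H2_def det_hmat n_def by (simp add: norm_mult prod_norm[symmetric] norm_power power_mult_distrib prod_power_distrib power_mult[symmetric] mult.commute)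
  also have "(\<Prod>i<n. (cmod (yy (zs ! i)))^(2*(n-1))) = (\<Prod>v\<in>R. (1 / mu v)^(2*(n-1)))"
    using prod.reindex_bij_betw[OF bij, of "\<lambda>v. (1 / mu v)^(2*(n-1))"] by (simp add: yy_norm)
  also have "(cmod (Determinant.det (vdm zs)))^2 = DRset R" using vdm_DR[OF zs(1)] zs(2) by simp
  finally have "H2 = (\<Prod>v\<in>R. (1 / mu v)^(2*(n-1))) * DRset R" .
  moreover have "(\<Prod>v\<in>R. (1 / mu v)^(2*(n-1))) = 1 / Pm"
    unfolding Pm_def by (simp add: prod_dividef power_one_over)
  moreover have "Pm > 0" unfolding Pm_def by (intro prod_pos) (simp add: mu_pos)
  ultimately have DRe: "DRset R = Pm * H2" by simp
  have Pm: "Pm \<ge> 0" unfolding Pm_def by (simp add: prod_nonneg mu_pos less_imp_le)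
  have "(DRset R)^2 = Pm^2 * (H2 * H2)" unfolding DRe by (simp add: power2_eq_square)
  also have "\<dots> \<le> Pm^2 * ((\<Prod>v\<in>V'. cmod (v - w v))^2 * c ^ card V' * real n ^ (2 * n - card V'))"
    by (rule mult_left_mono[OF HH]) simp
  finally show ?thesis unfolding Pm_def c_def n_def by (simp add: mult_ac)
qed


lemma cube_le_3pow: "(c::nat)^3 \<le> 3^c"
proof (cases "c \<ge> 3")
  case True
  then show ?thesis
  proof (induction c rule: nat_induct_at_least)
    case base then show ?case by simp
  next
    case (Suc n)
    obtain m where "n = m + 3" using Suc.hyps by (metis add.commute le_iff_add)
    then have "(Suc n)^3 \<le> 3 * n^3" by (simp add: power3_eq_cube algebra_simps)
    also have "\<dots> \<le> 3 * 3^n" using Suc.IH by simp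
    finally show ?case by simp
  qed
next
  case False
  then have "c = 0 \<or> c = 1 \<or> c = 2" by auto
  then show ?thesis by auto
qed

lemma cube_le_9pow: "(c::nat) \<ge> 1 \<Longrightarrow> c^3 \<le> 9^(c - 1)"
proof (induction c rule: nat_induct_at_least)
  case base then show ?case by simp
next
  case (Suc n)
  obtain m where "n = m + 1" using Suc.hyps by (metis add.commute le_iff_add)
  then have "(Suc n)^3 \<le> 9 * n^3" by (simp add: power3_eq_cube algebra_simps)
  also have "\<dots> \<le> 9 * 9^(n - 1)" using Suc.IH by simp
  also have "\<dots> = 9^(Suc n - 1)" using Suc.hyps by (cases n) auto
  finally show ?case .
qed

lemma cube_root_le:
  assumes "(x::real) \<ge> 0" "a \<ge> 0" "x^3 \<le> 3 powr (3 * a)"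
  shows "x \<le> 3 powr a"
proof -
  have e: "(3 powr a)^3 = 3 powr (3 * a)" using powr_power[of 3 a 3] by simp
  have "x ^ Suc 2 \<le> (3 powr a) ^ Suc 2" using assms(3) e by (simp add: eval_nat_numeral)
  then show ?thesis by (rule power_le_imp_le_base) simp
qed

lemma mult_le1: "real (c::nat) \<le> 3 powr (real c / 3)"
proof (rule cube_root_le)
  have "(real c)^3 \<le> real (3^c)" using cube_le_3pow[of c] by (metis of_nat_le_iff of_nat_power)
  also have "\<dots> = 3 powr (real c)" using powr_realpow[of 3 c] by simp
  finally show "(real c)^3 \<le> 3 powr (3 * (real c / 3))" by simp
qed auto

lemma mult_le2: "(c::nat) \<ge> 1 \<Longrightarrow> real c \<le> 3 powr (2 * (real c - 1) / 3)"
proof (rule cube_root_le)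
  assume c: "c \<ge> 1"
  have "(real c)^3 \<le> real (9^(c - 1))" using cube_le_9pow[OF c] by (metis of_nat_le_iff of_nat_power)
  also have "\<dots> = 3 powr (2 * real (c - 1))"
  proof -
    have "real (9^(c - 1)) = (9::real)^(c - 1)" by simp
    also have "(9::real)^(c - 1) = 3^(2 * (c - 1))" by (simp add: power_mult)
    also have "\<dots> = 3 powr (real (2 * (c - 1)))" using powr_realpow[of 3 "2 * (c - 1)"] by simp
    also have "real (2 * (c - 1)) = 2 * real (c - 1)" by simp
    finally show ?thesis .
  qed
  also have "2 * real (c - 1) = 3 * (2 * (real c - 1) / 3)" using c by (simp add: of_nat_diff)
  finally show "(real c)^3 \<le> 3 powr (3 * (2 * (real c - 1) / 3))" .
qed auto


lemma size_proots_complex: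
  fixes P :: "complex poly"
  assumes "P \<noteq> 0"
  shows "size (proots P) = degree P"
proof -
  obtain A where A: "size A = degree P" "P = Polynomial.smult (lead_coeff P) (\<Prod>x\<in>#A. [:- x, 1:])"
    using alg_closed_imp_factorization[OF assms] by blast
  have lc: "lead_coeff P \<noteq> 0" using assms by simp
  have "proots P = proots (\<Prod>x\<in>#A. [:- x, 1:])"
    by (subst A(2)) (rule proots_smult[OF lc])
  also have "\<dots> = (\<Sum>x\<in>#A. proots [:- x, 1:])"
  proof -
    have nz: "0 \<notin># image_mset (\<lambda>x. [:- x, 1:]) A" by (auto simp: pCons_eq_0_iff)
    show ?thesis using proots_prod_mset[OF nz] by (simp add: image_mset.compositionality o_def)
  qed
  also have "\<dots> = (\<Sum>x\<in>#A. {#x#})" by (simp add: proots_linear_factor)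
  also have "\<dots> = A" by (rule Union_image_single_mset)
  finally show ?thesis using A(1) by simp
qed

lemma root_list_props:
  fixes P :: "complex poly"
  assumes "P \<noteq> 0"
  shows "mset (root_list P) = proots P" "length (root_list P) = degree P"
    "set (root_list P) = root_set P"
proof -
  show m: "mset (root_list P) = proots P"
    unfolding root_list_def by (rule someI_ex) (rule ex_mset)
  show "length (root_list P) = degree P"
    using size_proots_complex[OF assms] m by (metis size_mset)
  show "set (root_list P) = root_set P"
    using m set_count_proots[OF assms] unfolding root_set_def by (metis set_mset_mset)
qed

lemma good_image:
  assumes "set xs = R" "I \<subseteq> {0..<length xs}" "card I = card R" "inj_on ((!) xs) I"
  shows "(!) xs ` I = R"
proof -
  have fin: "finite R" using assms(1) by auto
  have sub: "(!) xs ` I \<subseteq> R" using assms(1,2) by auto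
  have "card ((!) xs ` I) = card R" using card_image[OF assms(4)] assms(3) by simp
  then show ?thesis using card_subset_eq[OF fin sub] by simp
qed

lemma count_good:
  assumes R: "set xs = R"
  shows "card {I. I \<subseteq> {0..<length xs} \<and> card I = card R \<and> inj_on ((!) xs) I} \<le> (\<Prod>v\<in>R. count (mset xs) v)"
proof -
  define G where "G = {I. I \<subseteq> {0..<length xs} \<and> card I = card R \<and> inj_on ((!) xs) I}"
  define B where "B = Pi\<^sub>E R (\<lambda>v. {i. i < length xs \<and> xs ! i = v})"
  define \<phi> where "\<phi> = (\<lambda>I. restrict (\<lambda>v. the_inv_into I ((!) xs) v) R)"
  have finR: "finite R" using R by auto
  have img: "(!) xs ` I = R" if "I \<in> G" for I using good_image[OF R] that unfolding G_def by auto
  have maps: "\<phi> ` G \<subseteq> B"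
  proof
    fix f assume "f \<in> \<phi> ` G"
    then obtain I where I: "I \<in> G" "f = \<phi> I" by auto
    have inj: "inj_on ((!) xs) I" and sub: "I \<subseteq> {0..<length xs}" using I(1) unfolding G_def by auto
    show "f \<in> B" unfolding B_def I(2) \<phi>_def
    proof (rule restrict_PiE_iff[THEN iffD2], intro ballI)
      fix v assume v: "v \<in> R"
      then have vI: "v \<in> (!) xs ` I" using img[OF I(1)] by simp
      have "the_inv_into I ((!) xs) v \<in> I" by (rule the_inv_into_into[OF inj vI]) simp
      moreover have "xs ! the_inv_into I ((!) xs) v = v" by (rule f_the_inv_into_f[OF inj vI])
      ultimately show "the_inv_into I ((!) xs) v \<in> {i. i < length xs \<and> xs ! i = v}" using sub by auto
    qed
  qed
  have inj\<phi>: "inj_on \<phi> G"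
  proof (rule inj_onI)
    fix I J assume I: "I \<in> G" and J: "J \<in> G" and e: "\<phi> I = \<phi> J"
    have injI: "inj_on ((!) xs) I" and injJ: "inj_on ((!) xs) J" using I J unfolding G_def by auto
    have "I = the_inv_into I ((!) xs) ` R" using the_inv_into_onto[OF injI] img[OF I] by simp
    also have "\<dots> = \<phi> I ` R" unfolding \<phi>_def by auto
    also have "\<dots> = \<phi> J ` R" using e by simp
    also have "\<dots> = the_inv_into J ((!) xs) ` R" unfolding \<phi>_def by auto
    also have "\<dots> = J" using the_inv_into_onto[OF injJ] img[OF J] by simp
    finally show "I = J" .
  qed
  have finB: "finite B" unfolding B_def using finR by (intro finite_PiE) auto
  have "card G \<le> card B" by (rule card_inj_on_le[OF inj\<phi> maps finB])
  also have "card B = (\<Prod>v\<in>R. card {i. i < length xs \<and> xs ! i = v})"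
    unfolding B_def by (rule card_PiE[OF finR])
  also have "\<dots> = (\<Prod>v\<in>R. count (mset xs) v)"
  proof (intro prod.cong refl)
    fix v
    have "count (mset xs) v = length (filter ((=) v) xs)" by (simp add: count_mset count_list_eq_length_filter)
    also have "\<dots> = card {i. i < length xs \<and> v = xs ! i}" by (rule length_filter_conv_card)
    also have "{i. i < length xs \<and> v = xs ! i} = {i. i < length xs \<and> xs ! i = v}" by auto
    finally show "card {i. i < length xs \<and> xs ! i = v} = count (mset xs) v" by simp
  qed
  finally show ?thesis unfolding G_def .
qed

lemma term_bound:
  fixes xs :: "complex list"
  assumes R: "set xs = R" and I: "I \<subseteq> {0..<length xs}" "card I = card R"
  shows "cmod (\<Prod>p\<in>{(i, j). i \<in> I \<and> j \<in> I \<and> i < j}. (xs ! fst p - xs ! snd p) ^ 2)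
     \<le> (if inj_on ((!) xs) I then DRset R else 0)"
proof (cases "inj_on ((!) xs) I")
  case True
  have fin: "finite I" using I finite_subset by blast
  have "cmod (\<Prod>p\<in>{(i, j). i \<in> I \<and> j \<in> I \<and> i < j}. (xs ! fst p - xs ! snd p) ^ 2)
      = (\<Prod>p\<in>{(i, j). i \<in> I \<and> j \<in> I \<and> i < j}. (cmod (xs ! fst p - xs ! snd p)) ^ 2)"
    by (simp add: prod_norm[symmetric] norm_power)
  also have "\<dots> = DRset ((!) xs ` I)" by (rule pairs_lt_sq[OF fin True])
  also have "(!) xs ` I = R" by (rule good_image[OF R I True])
  finally show ?thesis using True by simp
next
  case False
  then obtain i j where ij: "i \<in> I" "j \<in> I" "i \<noteq> j" "xs ! i = xs ! j" unfolding inj_on_def by blast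
  define a where "a = min i j"
  define b where "b = max i j"
  have ab: "(a, b) \<in> {(i, j). i \<in> I \<and> j \<in> I \<and> i < j}" "xs ! a = xs ! b"
    using ij unfolding a_def b_def by (auto simp: min_def max_def)
  have fin: "finite {(i, j). i \<in> I \<and> j \<in> I \<and> i < j}"
    using I by (auto intro: finite_subset[of _ "I \<times> I"] finite_subset[of I])
  have "(\<Prod>p\<in>{(i, j). i \<in> I \<and> j \<in> I \<and> i < j}. (xs ! fst p - xs ! snd p) ^ 2) = 0"
    by (rule prod_zero[OF fin]) (use ab in force)
  then show ?thesis using False by simp
qed

lemma sDisc_bound:
  fixes P :: "complex poly"
  assumes P: "P \<noteq> 0" and r: "r = card (root_set P)"
  shows "cmod (sDisc (degree P - r) P) \<le>
    cmod (lead_coeff P) ^ (2*(r-1)) * real (\<Prod>v\<in>root_set P. count (proots P) v) * DRset (root_set P)"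
proof -
  define d where "d = degree P"
  define xs where "xs = root_list P"
  define R where "R = root_set P"
  have xs: "mset xs = proots P" "length xs = d" "set xs = R"
    using root_list_props[OF P] unfolding xs_def d_def R_def by auto
  have rd: "r \<le> d" using r xs card_length unfolding R_def by metis
  define Is where "Is = {I. I \<subseteq> {0..<d} \<and> card I = r}"
  define g where "g = (\<lambda>I. \<Prod>p\<in>{(i, j). i \<in> I \<and> j \<in> I \<and> i < j}. (xs ! fst p - xs ! snd p) ^ 2)"
  have finIs: "finite Is" unfolding Is_def by (rule finite_subset[of _ "Pow {0..<d}"]) auto
  have DRnn: "DRset R \<ge> 0" unfolding DRset_def by (simp add: prod_nonneg)
  have sD: "sDisc (d - r) P = lead_coeff P ^ (2*(r-1)) * (\<Sum>I\<in>Is. g I)"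
  proof -
    have "d - (d - r) = r" using rd by simp
    moreover have "2 * r - 2 = 2 * (r - 1)" by simp
    ultimately show ?thesis unfolding sDisc_def Let_def Is_def g_def xs_def d_def by simp
  qed
  have "cmod (\<Sum>I\<in>Is. g I) \<le> (\<Sum>I\<in>Is. cmod (g I))" by (rule norm_sum)
  also have "\<dots> \<le> (\<Sum>I\<in>Is. if inj_on ((!) xs) I then DRset R else 0)"
  proof (rule sum_mono)
    fix I assume "I \<in> Is"
    then show "cmod (g I) \<le> (if inj_on ((!) xs) I then DRset R else 0)"
      unfolding g_def Is_def using term_bound[OF xs(3), of I] xs(2) r R_def by auto
  qed
  also have "\<dots> = (\<Sum>I\<in>{I\<in>Is. inj_on ((!) xs) I}. DRset R)"
    by (rule sum.inter_filter[OF finIs, symmetric])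
  also have "\<dots> = real (card {I\<in>Is. inj_on ((!) xs) I}) * DRset R" by simp
  also have "\<dots> \<le> real (\<Prod>v\<in>R. count (mset xs) v) * DRset R"
  proof (rule mult_right_mono[OF _ DRnn])
    have "{I\<in>Is. inj_on ((!) xs) I} = {I. I \<subseteq> {0..<length xs} \<and> card I = card R \<and> inj_on ((!) xs) I}"
      unfolding Is_def using xs(2) r R_def by auto
    then show "real (card {I\<in>Is. inj_on ((!) xs) I}) \<le> real (\<Prod>v\<in>R. count (mset xs) v)"
      using count_good[OF xs(3)] by (simp only: of_nat_le_iff)
  qed
  finally have "cmod (\<Sum>I\<in>Is. g I) \<le> real (\<Prod>v\<in>R. count (proots P) v) * DRset R" using xs(1) by simp
  then show ?thesis unfolding sD d_def[symmetric] R_def[symmetric]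
    by (simp add: norm_mult norm_power mult.assoc mult_left_mono)
qed


lemma finite_root_set: "P \<noteq> 0 \<Longrightarrow> finite (root_set (P::complex poly))"
  unfolding root_set_def by (rule poly_roots_finite)

lemma count_pos:
  assumes P: "P \<noteq> 0" and v: "v \<in> root_set P"
  shows "count (proots P) v \<ge> 1"
proof -
  have "v \<in># proots P" using set_count_proots[OF P] v unfolding root_set_def by simp
  then have "0 < count (proots P) v" by simp
  then show ?thesis by simp
qed

lemma sum_count: "P \<noteq> 0 \<Longrightarrow> (\<Sum>v\<in>root_set P. count (proots P) v) = degree (P::complex poly)"
  using size_multiset_overloaded_eq[of "proots P"] set_count_proots[of P] size_proots_complex[of P]
  unfolding root_set_def by simp

lemma cnt_bound:
  fixes P :: "complex poly"
  assumes P: "P \<noteq> 0"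
  shows "real (\<Prod>v\<in>root_set P. count (proots P) v) \<le>
    3 powr (min (real (degree P)) (2 * real (degree P) - 2 * real (card (root_set P))) / 3)"
proof -
  define R where "R = root_set P"
  define c where "c = (\<lambda>v. count (proots P) v)"
  have fin: "finite R" using finite_root_set[OF P] unfolding R_def .
  have c1: "c v \<ge> 1" if "v \<in> R" for v using count_pos[OF P] that unfolding R_def c_def by auto
  have sc: "(\<Sum>v\<in>R. real (c v)) = real (degree P)"
    using sum_count[OF P] unfolding R_def c_def by (metis of_nat_sum)
  have e: "real (\<Prod>v\<in>R. c v) = (\<Prod>v\<in>R. real (c v))" by simp
  have A: "real (\<Prod>v\<in>R. c v) \<le> 3 powr (real (degree P) / 3)"
  proof -
    have "(\<Prod>v\<in>R. real (c v)) \<le> (\<Prod>v\<in>R. 3 powr (real (c v) / 3))"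
      by (intro prod_mono) (auto simp: mult_le1)
    also have "\<dots> = 3 powr (\<Sum>v\<in>R. real (c v) / 3)" by (rule powr_sum[symmetric]) simp
    also have "(\<Sum>v\<in>R. real (c v) / 3) = real (degree P) / 3" using sc by (simp add: sum_divide_distrib[symmetric])
    finally show ?thesis using e by simp
  qed
  have B: "real (\<Prod>v\<in>R. c v) \<le> 3 powr ((2 * real (degree P) - 2 * real (card R)) / 3)"
  proof -
    have "(\<Prod>v\<in>R. real (c v)) \<le> (\<Prod>v\<in>R. 3 powr (2 * (real (c v) - 1) / 3))"
      using mult_le2 c1 by (intro prod_mono) auto
    also have "\<dots> = 3 powr (\<Sum>v\<in>R. 2 * (real (c v) - 1) / 3)" by (rule powr_sum[symmetric]) simp
    also have "(\<Sum>v\<in>R. 2 * (real (c v) - 1) / 3) = (2 * real (degree P) - 2 * real (card R)) / 3"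
    proof -
      have "(\<Sum>v\<in>R. 2 * (real (c v) - 1) / 3) = (\<Sum>v\<in>R. (2/3) * real (c v) - 2/3)"
        by (intro sum.cong) (auto simp: field_simps)
      also have "\<dots> = (2/3) * (\<Sum>v\<in>R. real (c v)) - (2/3) * real (card R)"
        by (simp add: sum_subtractf sum_distrib_left)
      finally show ?thesis using sc by simp
    qed
    finally show ?thesis using e by simp
  qed
  have "real (\<Prod>v\<in>R. c v) \<le> 3 powr (min (real (degree P)) (2 * real (degree P) - 2 * real (card R)) / 3)"
  proof (cases "real (degree P) \<le> 2 * real (degree P) - 2 * real (card R)")
    case True
    then have m: "min (real (degree P)) (2 * real (degree P) - 2 * real (card R)) = real (degree P)"
      by (rule min_absorb1)
    show ?thesis unfolding m by (rule A)
  next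
    case False
    then have m: "min (real (degree P)) (2 * real (degree P) - 2 * real (card R)) = 2 * real (degree P) - 2 * real (card R)"
      by (intro min_absorb2) simp
    show ?thesis unfolding m by (rule B)
  qed
  then show ?thesis unfolding R_def c_def .
qed

lemma mahler_bound:
  fixes P :: "complex poly"
  assumes P: "P \<noteq> 0"
  shows "cmod (lead_coeff P) * (\<Prod>v\<in>root_set P. mu v) \<le> mahler_measure P"
proof -
  have "mahler_measure P = cmod (lead_coeff P) * (\<Prod>v\<in>root_set P. mu v ^ count (proots P) v)"
    unfolding mahler_measure_def image_prod_mset_multiplicity mu_def
    using set_count_proots[OF P] unfolding root_set_def by simp
  moreover have "(\<Prod>v\<in>root_set P. mu v) \<le> (\<Prod>v\<in>root_set P. mu v ^ count (proots P) v)"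
  proof (intro prod_mono conjI)
    fix v assume "v \<in> root_set P"
    then show "mu v \<le> mu v ^ count (proots P) v"
      using count_pos[OF P] by (intro self_le_power) (auto simp: mu_def)
  qed (simp add: mu_def)
  ultimately show ?thesis by (simp add: mult_left_mono)
qed

lemma sep_witness:
  fixes P :: "complex poly"
  assumes P: "P \<noteq> 0" and r2: "card (root_set P) \<ge> 2" and v: "v \<in> root_set P"
  shows "\<exists>w. w \<in> root_set P \<and> w \<noteq> v \<and> sep P v = cmod (v - w)"
proof -
  define S where "S = {cmod (v - w) | w. w \<in> root_set P \<and> w \<noteq> v}"
  have fin: "finite (root_set P)" by (rule finite_root_set[OF P])
  have S_eq: "S = (\<lambda>w. cmod (v - w)) ` (root_set P - {v})" unfolding S_def by auto
  have "root_set P - {v} \<noteq> {}"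
  proof
    assume "root_set P - {v} = {}"
    then have "root_set P \<subseteq> {v}" by auto
    then have "card (root_set P) \<le> 1" using card_mono[of "{v}"] by fastforce
    then show False using r2 by simp
  qed
  then have "S \<noteq> {}" "finite S" using S_eq fin by auto
  then have "Min S \<in> S" by (rule Min_in[rotated])
  then show ?thesis unfolding sep_def S_def[symmetric] by (auto simp: S_def)
qed


lemma final_arith:
  fixes sD aE ME Cnt DR Pm C3 q rr S :: real
  assumes sD: "sD \<le> aE * Cnt * DR" and Cnt: "Cnt \<le> C3" and C3: "C3 > 0" and DR: "0 \<le> DR"
    and aE: "aE \<ge> 0" and Pm: "Pm > 0" and ME: "ME > 0"
    and aPM: "aE * Pm \<le> ME" and q: "q > 0" and rr: "rr > 0" and Y: "DR / (Pm * q * rr) \<le> S"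
  shows "sD / ME * (1/q) * (1/rr) * (1/C3) \<le> S"
proof -
  have den: "ME * q * rr * C3 > 0" using ME q rr C3 by simp
  have "sD / ME * (1/q) * (1/rr) * (1/C3) = sD / (ME * q * rr * C3)" by simp
  also have "\<dots> \<le> (aE * C3 * DR) / (ME * q * rr * C3)"
  proof (rule divide_right_mono)
    have "aE * Cnt * DR \<le> aE * C3 * DR" using Cnt aE DR by (intro mult_right_mono mult_left_mono) auto
    then show "sD \<le> aE * C3 * DR" using sD by linarith
  qed (use den in simp)
  also have "\<dots> = (aE / ME) * (DR / (q * rr))" using C3 by (simp add: field_simps)
  also have "\<dots> \<le> (1 / Pm) * (DR / (q * rr))"
  proof (rule mult_right_mono)
    show "aE / ME \<le> 1 / Pm" using aPM Pm ME by (simp add: divide_le_eq field_simps)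
  qed (use DR q rr in simp)
  also have "\<dots> = DR / (Pm * q * rr)" by simp
  finally show ?thesis using Y by linarith
qed

lemma Y_le:
  fixes DR Pm S :: real and r k :: nat
  assumes DR: "DR^2 \<le> Pm^2 * S^2 * (real r ^ 3 / 3) ^ k * real r ^ (2 * r - k)"
    and k: "k \<le> r" and r: "r > 0" and Pm: "Pm > 0" and S: "S \<ge> 0"
  shows "DR / (Pm * (real r / sqrt 3) ^ k * real r ^ r) \<le> S"
proof -
  define q where "q = (real r / sqrt 3) ^ k"
  define rr where "rr = real r ^ r"
  have q: "q > 0" and rr: "rr > 0" unfolding q_def rr_def using r by auto
  have q2: "q^2 = (real r ^ 2 / 3) ^ k"
  proof -
    have "q^2 = (real r / sqrt 3) ^ (k * 2)" unfolding q_def by (rule power_mult[symmetric])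
    also have "\<dots> = ((real r / sqrt 3) ^ 2) ^ k" by (subst mult.commute) (rule power_mult)
    also have "(real r / sqrt 3) ^ 2 = real r ^ 2 / 3" by (simp add: power_divide)
    finally show ?thesis .
  qed
  have "(real r ^ 3 / 3) ^ k * real r ^ (2 * r - k) = (real r ^ 2 / 3) ^ k * (real r ^ k * real r ^ (2 * r - k))"
    by (simp add: power_mult_distrib[symmetric] power3_eq_cube power2_eq_square)
  also have "real r ^ k * real r ^ (2 * r - k) = rr^2"
  proof -
    have "real r ^ k * real r ^ (2 * r - k) = real r ^ (k + (2 * r - k))" by (rule power_add[symmetric])
    also have "k + (2 * r - k) = r * 2" using k by simp
    also have "real r ^ (r * 2) = rr^2" unfolding rr_def by (rule power_mult)
    finally show ?thesis .
  qed
  finally have "DR^2 \<le> (Pm * q * rr)^2 * S^2" using DR q2 by (simp add: power_mult_distrib mult_ac)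
  then have "(DR / (Pm * q * rr))^2 \<le> S^2"
    using Pm q rr by (simp add: power_divide divide_le_eq mult.commute)
  then have "DR / (Pm * q * rr) \<le> S" by (rule power2_le_imp_le) (use S in simp)
  then show ?thesis unfolding q_def rr_def .
qed

theorem theorem9:
  fixes P :: "complex poly" and V' :: "complex set" and d r :: nat
  assumes "P \<noteq> 0"
    and "d = degree P"
    and "r = card (root_set P)"
    and "r \<ge> 2"
    and "V' \<subseteq> root_set P"
  shows "(\<Prod>v\<in>V'. sep P v) \<ge>
     cmod (sDisc (d - r) P) / mahler_measure P ^ (2 * (r - 1))
     * (real r / sqrt 3) powr (- real (card V'))
     * real r powr (- real r)
     * (1 / 3) powr (min (real d) (2 * real d - 2 * real r) / 3)"
proof -
  note P = assms(1)
  define R where "R = root_set P"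
  define k where "k = card V'"
  define e where "e = 2 * (r - 1)"
  define m where "m = min (real d) (2 * real d - 2 * real r)"
  have finR: "finite R" unfolding R_def by (rule finite_root_set[OF P])
  obtain zs where zs: "set zs = R" "distinct zs" using finite_distinct_list[OF finR] by blast
  have lz: "length zs = r" using distinct_card[OF zs(2)] zs(1) assms(3) unfolding R_def by simp
  have V': "V' \<subseteq> R" using assms(5) unfolding R_def .
  have kr: "k \<le> r" unfolding k_def assms(3) R_def[symmetric] using card_mono[OF finR V'] .
  have "\<forall>v\<in>V'. \<exists>w. w \<in> R \<and> w \<noteq> v \<and> sep P v = cmod (v - w)"
    using sep_witness[OF P] assms(3,4) V' unfolding R_def by auto
  then obtain w where w: "\<And>v. v \<in> V' \<Longrightarrow> w v \<in> R \<and> w v \<noteq> v \<and> sep P v = cmod (v - w v)"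
    by metis
  define S where "S = (\<Prod>v\<in>V'. sep P v)"
  have S_eq: "(\<Prod>v\<in>V'. cmod (v - w v)) = S" unfolding S_def using w by (intro prod.cong) auto
  have Snn: "S \<ge> 0" unfolding S_def using w by (intro prod_nonneg) (metis norm_ge_zero)
  define Pm where "Pm = (\<Prod>v\<in>R. mu v ^ e)"
  have Pm: "Pm > 0" unfolding Pm_def by (intro prod_pos) (simp add: mu_pos)
  have DRb: "(DRset R)^2 \<le> Pm^2 * S^2 * (real r ^ 3 / 3) ^ k * real r ^ (2 * r - k)"
    using DR_bound[OF zs(2) zs(1) V', of w] w lz S_eq unfolding Pm_def e_def k_def by simp
  have Y: "DRset R / (Pm * (real r / sqrt 3) ^ k * real r ^ r) \<le> S"
    by (rule Y_le[OF DRb kr _ Pm Snn]) (use assms(4) in simp)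
  define a where "a = cmod (lead_coeff P)"
  have a: "a > 0" unfolding a_def using P by simp
  define M where "M = mahler_measure P"
  have aM: "a * (\<Prod>v\<in>R. mu v) \<le> M" using mahler_bound[OF P] unfolding a_def R_def M_def .
  have prodmu: "(\<Prod>v\<in>R. mu v) > 0" by (intro prod_pos) (simp add: mu_pos)
  have M: "M > 0" using aM a prodmu by (smt (verit) mult_pos_pos)
  have aPM: "a ^ e * Pm \<le> M ^ e"
  proof -
    have "(a * (\<Prod>v\<in>R. mu v)) ^ e \<le> M ^ e" by (rule power_mono[OF aM]) (use a prodmu in simp)
    then show ?thesis unfolding Pm_def by (simp add: power_mult_distrib prod_power_distrib)
  qed
  define Cnt where "Cnt = real (\<Prod>v\<in>R. count (proots P) v)"
  have sDb: "cmod (sDisc (d - r) P) \<le> a ^ e * Cnt * DRset R"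
    using sDisc_bound[OF P assms(3)] unfolding a_def e_def Cnt_def R_def assms(2) .
  have Cb: "Cnt \<le> 3 powr (m / 3)"
    using cnt_bound[OF P] unfolding Cnt_def R_def m_def assms(2) assms(3) .
  have DRnn: "DRset R \<ge> 0" unfolding DRset_def by (simp add: prod_nonneg)
  have r0: "real r > 0" using assms(4) by simp
  have A: "(real r / sqrt 3) powr (- real k) = 1 / (real r / sqrt 3) ^ k"
    using r0 by (simp add: powr_minus_divide powr_realpow)
  have B: "real r powr (- real r) = 1 / real r ^ r"
    using r0 by (simp add: powr_minus_divide powr_realpow)
  have C: "(1 / 3) powr (m / 3) = 1 / 3 powr (m / 3)" by (simp add: powr_divide)
  have "cmod (sDisc (d - r) P) / M ^ e * (1 / (real r / sqrt 3) ^ k) * (1 / real r ^ r) * (1 / 3 powr (m / 3)) \<le> S"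
    by (rule final_arith[OF sDb Cb _ DRnn _ Pm _ aPM _ _ Y]) (use a M r0 in auto)
  then show ?thesis
    unfolding S_def[symmetric] M_def[symmetric] e_def[symmetric] k_def[symmetric] m_def[symmetric] A B C .
qed


end
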